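(* Let $G_{FL}=(\omega^{<\omega},c_{00}(\omega))$. For all finite games $A$ and $B$, every game embedding $g\colon A\to B$ and every game embedding $f\colon A\to G_{FL}$, there is a game embedding $h\colon B\to G_{FL}$ with $h\circ g=f$. (That is, $G_{FL}$ is injective, in the category of games with game embeddings, with respect to all game embeddings between finite games.)
   Context: For a set $M$, $M^{<\omega}=\bigcup_{n<\omega}M^n$ is the set of finite sequences in $M$; $|t|$ denotes the length of $t$, $t\restriction k$ its initial segment of length $k$, $t^\frown x$ the extension of $t$ by the element $x$, and $\langle\rangle$ the empty sequence. A game tree is a set $T\subseteq M^{<\omega}$ (for some set $M$) such that (i) if $t\in T$ and $k\le |t|$ then $t\restriction k\in T$, and (ii) for every $t\in T$ there is $x$ with $t^\frown x\in T$. $\mathrm{Run}(T)=\{R\in M^\omega: R\restriction n\in T\text{ for all }n<\omega\}$. A game is a pair $G=(T,A)$ with $T$ a game tree and $A\subseteq\mathrm{Run}(T)$ (runs in $A$ are won by Alice, the other runs by Bob). A game $(T,A)$ is finite if $\mathrm{Run}(T)$ is finite. A map $f\colon T_1\to T_2$ between game trees is chronological if $|f(t)|=|t|$ and $f(t\restriction k)=f(t)\restriction k$ for all $t\in T_1$, $k\le|t|$; it induces $\bar f\colon\mathrm{Run}(T_1)\to\mathrm{Run}(T_2)$ with $\bar f(R)\restriction n=f(R\restriction n)$. For games $G_i=(T_i,A_i)$, a chronological $f\colon T_1\to T_2$ is an A-morphism $G_1\to G_2$ if $\bar f[A_1]\subseteq A_2$, a B-morphism if $\bar f[\mathrm{Run}(T_1)\setminus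 A_1]\subseteq \mathrm{Run}(T_2)\setminus A_2$, and a game embedding if it is injective and both an A-morphism and a B-morphism. $c_{00}(\omega)$ denotes the set of eventually zero sequences in $\omega^\omega$; note $\mathrm{Run}(\omega^{<\omega})=\omega^\omega$. *)

theory Defs
  imports Main
begin

text \<open>Finite sequences are lists; infinite sequences (runs) are functions nat => 'a.
  The restriction R|n of a run is map R [0..<n].\<close>

definition game_tree :: "'a list set \<Rightarrow> bool" where
  "game_tree T \<longleftrightarrow>
     (\<forall>t\<in>T. \<forall>k\<le>length t. take k t \<in> T) \<and> (\<forall>t\<in>T. \<exists>x. t @ [x] \<in> T)"

definition runs :: "'a list set \<Rightarrow> (nat \<Rightarrow> 'a) set" where
  "runs T = {R. \<forall>n. map R [0..<n] \<in> T}"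

definition is_game :: "'a list set \<times> (nat \<Rightarrow> 'a) set \<Rightarrow> bool" where
  "is_game G \<longleftrightarrow> game_tree (fst G) \<and> snd G \<subseteq> runs (fst G)"

definition finite_game :: "'a list set \<times> (nat \<Rightarrow> 'a) set \<Rightarrow> bool" where
  "finite_game G \<longleftrightarrow> finite (runs (fst G))"

definition chronological :: "('a list \<Rightarrow> 'b list) \<Rightarrow> 'a list set \<Rightarrow> 'b list set \<Rightarrow> bool" where
  "chronological f T1 T2 \<longleftrightarrow>
     (\<forall>t\<in>T1. f t \<in> T2 \<and> length (f t) = length t \<and>
        (\<forall>k\<le>length t. f (take k t) = take k (f t)))"

text \<open>The induced map on runs: fbar f R restricted to n equals f (R restricted to n).\<close>
definition run_map :: "('a list \<Rightarrow> 'b list) \<Rightarrow> (nat \<Rightarrow> 'a) \<Rightarrow> (nat \<Rightarrow> 'b)" where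
  "run_map f R = (\<lambda>n. f (map R [0..<Suc n]) ! n)"

definition A_morphism :: "('a list \<Rightarrow> 'b list) \<Rightarrow> 'a list set \<times> (nat \<Rightarrow> 'a) set
    \<Rightarrow> 'b list set \<times> (nat \<Rightarrow> 'b) set \<Rightarrow> bool" where
  "A_morphism f G1 G2 \<longleftrightarrow> chronological f (fst G1) (fst G2) \<and>
     run_map f ` snd G1 \<subseteq> snd G2"

definition B_morphism :: "('a list \<Rightarrow> 'b list) \<Rightarrow> 'a list set \<times> (nat \<Rightarrow> 'a) set
    \<Rightarrow> 'b list set \<times> (nat \<Rightarrow> 'b) set \<Rightarrow> bool" where
  "B_morphism f G1 G2 \<longleftrightarrow> chronological f (fst G1) (fst G2) \<and>
     run_map f ` (runs (fst G1) - snd G1) \<subseteq> runs (fst G2) - snd G2"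

definition game_embedding :: "('a list \<Rightarrow> 'b list) \<Rightarrow> 'a list set \<times> (nat \<Rightarrow> 'a) set
    \<Rightarrow> 'b list set \<times> (nat \<Rightarrow> 'b) set \<Rightarrow> bool" where
  "game_embedding f G1 G2 \<longleftrightarrow> inj_on f (fst G1) \<and> A_morphism f G1 G2 \<and> B_morphism f G1 G2"

definition c00 :: "(nat \<Rightarrow> nat) set" where
  "c00 = {R. \<exists>N. \<forall>n\<ge>N. R n = 0}"

definition G_FL :: "nat list set \<times> (nat \<Rightarrow> nat) set" where
  "G_FL = (UNIV, c00)"

end

theory Submission imports Defs begin

lemma ext_run:
  assumes gt: "game_tree T" and t: "t \<in> T"
  shows "\<exists>R\<in>runs T. map R [0..<length t] = t"
proof -
  define e where "e = rec_nat t (\<lambda>n u. u @ [SOME x. u @ [x] \<in> T])"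
  have e0: "e 0 = t" by (simp add: e_def)
  have eS: "e (Suc n) = e n @ [SOME x. e n @ [x] \<in> T]" for n by (simp add: e_def)
  have eT: "e n \<in> T" for n
  proof (induction n)
    case 0 then show ?case using t e0 by simp
  next
    case (Suc n)
    then obtain x where "e n @ [x] \<in> T" using gt unfolding game_tree_def by blast
    then show ?case unfolding eS by (rule someI)
  qed
  have elen: "length (e n) = length t + n" for n
    by (induction n) (simp_all add: e0 eS)
  have epre: "\<exists>ys. e m' = e m @ ys" if "m \<le> m'" for m m'
    using that
  proof (induction m' rule: dec_induct)
    case base then show ?case by simp
  next
    case (step k) then show ?case by (metis append.assoc eS)
  qed
  define R where "R i = e (Suc i) ! i" for i
  have mapR: "map R [0..<n] = take n (e n)" for n
  proof (rule nth_equalityI)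
    show "length (map R [0..<n]) = length (take n (e n))" using elen by simp
  next
    fix i assume "i < length (map R [0..<n])"
    then have i: "i < n" by simp
    obtain ys where "e n = e (Suc i) @ ys" using epre[of "Suc i" n] i by auto
    then show "map R [0..<n] ! i = take n (e n) ! i"
      using i elen[of "Suc i"] by (simp add: R_def nth_append)
  qed
  have "R \<in> runs T" unfolding runs_def
  proof
    show "\<forall>n. map R [0..<n] \<in> T"
    proof
      fix n
      have "length (e n) \<ge> n" using elen by simp
      then show "map R [0..<n] \<in> T" using gt eT[of n] mapR[of n] unfolding game_tree_def by auto
    qed
  qed
  moreover have "map R [0..<length t] = t"
  proof -
    obtain ys where "e (length t) = e 0 @ ys" using epre[of 0 "length t"] by auto
    then show ?thesis using mapR e0 by simp
  qed
  ultimately show ?thesis by blast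
qed


lemma take_map_upt: "take k (map F [0..<n]) = map F [0..<min k n]"
  by (cases "k \<le> n") (simp_all add: take_map min_def)

lemma map_upt_Suc: "map R [0..<Suc n] = map R [0..<n] @ [R n]"
  by simp

theorem mainTheorem1:
  fixes A :: "'a list set \<times> (nat \<Rightarrow> 'a) set"
    and B :: "'b list set \<times> (nat \<Rightarrow> 'b) set"
    and g :: "'a list \<Rightarrow> 'b list"
    and f :: "'a list \<Rightarrow> nat list"
  assumes "is_game A" and "is_game B"
    and "finite_game A" and "finite_game B"
    and "game_embedding g A B"
    and "game_embedding f A G_FL"
  shows "\<exists>h :: 'b list \<Rightarrow> nat list.
           game_embedding h B G_FL \<and> (\<forall>t\<in>fst A. h (g t) = f t)"
proof -
  obtain TA SA where A: "A = (TA, SA)" by (cases A)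
  obtain TB SB where B: "B = (TB, SB)" by (cases B)
  have gtA: "game_tree TA" and SA: "SA \<subseteq> runs TA"
    using assms(1) unfolding A is_game_def fst_conv snd_conv by blast+
  have gtB: "game_tree TB" and SB: "SB \<subseteq> runs TB"
    using assms(2) unfolding B is_game_def fst_conv snd_conv by blast+
  have finA: "finite (runs TA)" using assms(3) unfolding A finite_game_def fst_conv .
  have finB: "finite (runs TB)" using assms(4) unfolding B finite_game_def fst_conv .
  have injg: "inj_on g TA" and chg: "chronological g TA TB"
    and gA: "run_map g ` SA \<subseteq> SB" and gB: "run_map g ` (runs TA - SA) \<subseteq> runs TB - SB"
    using assms(5) unfolding A B game_embedding_def A_morphism_def B_morphism_def fst_conv snd_conv
    by blast+
  have injf: "inj_on f TA" and chf: "chronological f TA UNIV"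
    and fA: "run_map f ` SA \<subseteq> c00" and fB: "run_map f ` (runs TA - SA) \<subseteq> runs UNIV - c00"
    using assms(6) unfolding A G_FL_def game_embedding_def A_morphism_def B_morphism_def fst_conv snd_conv
    by blast+
  have tA: "take k a \<in> TA" if "a \<in> TA" for a k
    using gtA that unfolding game_tree_def by (metis nat_le_linear take_all)
  have tB: "take k a \<in> TB" if "a \<in> TB" for a k
    using gtB that unfolding game_tree_def by (metis nat_le_linear take_all)
  have glen: "length (g a) = length a" if "a \<in> TA" for a
    using chg that unfolding chronological_def by blast
  have gT: "g a \<in> TB" if "a \<in> TA" for a
    using chg that unfolding chronological_def by blast
  have gtake: "g (take k a) = take k (g a)" if "a \<in> TA" for a k
  proof (cases "k \<le> length a")
    case True then show ?thesis using chg that unfolding chronological_def by blast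
  next
    case False then show ?thesis using glen[OF that] by simp
  qed
  have flen: "length (f a) = length a" if "a \<in> TA" for a
    using chf that unfolding chronological_def by blast
  have ftake: "f (take k a) = take k (f a)" if "a \<in> TA" for a k
  proof (cases "k \<le> length a")
    case True then show ?thesis using chf that unfolding chronological_def by blast
  next
    case False then show ?thesis using flen[OF that] by simp
  qed
  define P where "P = (runs TB \<times> runs TB) \<inter> {p. fst p \<noteq> snd p}"
  define d where "d p = (LEAST i. fst p i \<noteq> snd p i)" for p :: "(nat \<Rightarrow> 'b) \<times> (nat \<Rightarrow> 'b)"
  define N where "N = Suc (Max (insert 0 (d ` P)))"
  have finP: "finite P" unfolding P_def using finB by auto
  have uniq: "R = R'" if "R \<in> runs TB" "R' \<in> runs TB" "map R [0..<m] = map R' [0..<m]" "N \<le> m"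
    for R R' m
  proof (rule ccontr)
    assume ne: "R \<noteq> R'"
    then have "(R, R') \<in> P" using that P_def by auto
    then have "d (R, R') \<le> Max (insert 0 (d ` P))" using finP by (intro Max_ge) auto
    then have dl: "d (R, R') < m" using that(4) N_def by simp
    have ex: "\<exists>i. R i \<noteq> R' i" using ne by auto
    have "R (d (R,R')) \<noteq> R' (d (R,R'))" unfolding d_def using LeastI_ex[OF ex] by simp
    moreover have "R (d (R,R')) = R' (d (R,R'))"
      using arg_cong[OF that(3), of "\<lambda>xs. xs ! d (R,R')"] dl by simp
    ultimately show False by simp
  qed
  have runpre: "map R [0..<n] \<in> TB" if "R \<in> runs TB" for R n
    using that unfolding runs_def by blast
  have sib: "x = y" if sx: "s @ [x] \<in> TB" and sy: "s @ [y] \<in> TB" and sN: "N \<le> length s" for s x y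
  proof -
    obtain R where R: "R \<in> runs TB" "map R [0..<length (s@[x])] = s @ [x]"
      using ext_run[OF gtB sx] by blast
    obtain R' where R': "R' \<in> runs TB" "map R' [0..<length (s@[y])] = s @ [y]"
      using ext_run[OF gtB sy] by blast
    have "map R [0..<length s] = s" "R (length s) = x" using R(2) by simp_all
    moreover have "map R' [0..<length s] = s" "R' (length s) = y" using R'(2) by simp_all
    ultimately have "R = R'" using uniq[OF R(1) R'(1) _ sN] by simp
    then show ?thesis using \<open>R (length s) = x\<close> \<open>R' (length s) = y\<close> by simp
  qed
  define S where "S = {f a ! i | a i. a \<in> TA \<and> length a \<le> N \<and> i < length a}"
  have "{a \<in> TA. length a \<le> N} \<subseteq> (\<lambda>(R,m). map R [0..<m]) ` (runs TA \<times> {..N})"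
  proof
    fix a assume "a \<in> {a \<in> TA. length a \<le> N}"
    then have aT: "a \<in> TA" and aN: "length a \<le> N" by simp_all
    obtain R where R: "R \<in> runs TA" "map R [0..<length a] = a"
      using ext_run[OF gtA aT] by blast
    show "a \<in> (\<lambda>(R,m). map R [0..<m]) ` (runs TA \<times> {..N})"
    proof (rule image_eqI[where x="(R, length a)"])
      show "a = (\<lambda>(R,m). map R [0..<m]) (R, length a)" using R(2) by simp
      show "(R, length a) \<in> runs TA \<times> {..N}" using R(1) aN by simp
    qed
  qed
  then have finLA: "finite {a \<in> TA. length a \<le> N}"
    by (rule finite_subset[OF _ finite_imageI[OF finite_cartesian_product[OF finA finite_atMost]]])
  have "S \<subseteq> (\<lambda>(a,i). f a ! i) ` ({a \<in> TA. length a \<le> N} \<times> {..<N})"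
    unfolding S_def
  proof (safe)
    fix a i assume "a \<in> TA" "length a \<le> N" "i < length a"
    show "f a ! i \<in> (\<lambda>(a,i). f a ! i) ` ({a \<in> TA. length a \<le> N} \<times> {..<N})"
    proof (rule image_eqI[where x="(a,i)"])
      show "f a ! i = (\<lambda>(a,i). f a ! i) (a, i)" by simp
      show "(a, i) \<in> {a \<in> TA. length a \<le> N} \<times> {..<N}" using \<open>a \<in> TA\<close> \<open>length a \<le> N\<close> \<open>i < length a\<close> by simp
    qed
  qed
  then have "finite S" by (rule finite_subset[OF _ finite_imageI[OF finite_cartesian_product[OF finLA finite_lessThan]]])
  then have "\<exists>m. \<forall>n\<in>S. n < m" by (simp only: finite_nat_set_iff_bounded)
  then obtain K where K: "\<And>x. x \<in> S \<Longrightarrow> x < K" by blast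
  obtain idx :: "(nat \<Rightarrow> 'b) \<Rightarrow> nat" where idx: "inj_on idx (runs TB)"
    using finite_imp_inj_to_nat_seg[OF finB] by (elim exE conjE) (rule that)
  define ginv where "ginv = the_inv_into TA g"
  define pick where "pick u = (SOME R. R \<in> runs TB \<and> map R [0..<length u] = u)" for u
  define val where "val u i = (if u \<in> g ` TA then f (ginv u) ! i
      else if i < N then K + idx (pick u) else if pick u \<in> SB then 0 else 1)" for u i
  define h where "h t = map (\<lambda>i. val (take (Suc i) t) i) [0..<length t]" for t
  have hlen: "length (h t) = length t" for t by (simp add: h_def)
  have hnth: "h t ! i = val (take (Suc i) t) i" if "i < length t" for t i
    using that by (simp add: h_def)
  have htake: "h (take k t) = take k (h t)" for k t
    by (rule nth_equalityI) (simp_all add: hlen hnth)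
  have pick: "pick u \<in> runs TB \<and> map (pick u) [0..<length u] = u" if "u \<in> TB" for u
    unfolding pick_def
  proof (rule someI_ex[where P="\<lambda>R. R \<in> runs TB \<and> map R [0..<length u] = u"])
    show "\<exists>R. R \<in> runs TB \<and> map R [0..<length u] = u" using ext_run[OF gtB that] by blast
  qed
  have ginv: "ginv u \<in> TA" "g (ginv u) = u" if "u \<in> g ` TA" for u
    unfolding ginv_def using the_inv_into_into[OF injg that subset_refl] f_the_inv_into_f[OF injg that] by simp_all
  have ginv2: "ginv (g a) = a" if "a \<in> TA" for a
    using that injg unfolding ginv_def by (simp add: the_inv_into_f_f)
  have imgtake: "take k u \<in> g ` TA" if uimg: "u \<in> g ` TA" for u k
  proof -
    obtain a where "a \<in> TA" "u = g a" using uimg by blast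
    then show ?thesis using gtake[of a k] tA[of a k] by (metis image_eqI)
  qed
  have agree: "h (g a) = f a" if a: "a \<in> TA" for a
  proof (rule nth_equalityI)
    show "length (h (g a)) = length (f a)" using hlen glen flen a by simp
  next
    fix i assume "i < length (h (g a))"
    then have i: "i < length a" using hlen glen a by simp
    have "take (Suc i) (g a) = g (take (Suc i) a)" using gtake a by simp
    moreover have "take (Suc i) a \<in> TA" using tA a by simp
    ultimately have "val (take (Suc i) (g a)) i = f (take (Suc i) a) ! i"
      unfolding val_def using ginv2 by auto
    also have "\<dots> = f a ! i" using ftake a by simp
    finally show "h (g a) ! i = f a ! i" using hnth i glen a by simp
  qed
  have injh: "inj_on h TB"
  proof (rule inj_onI, rule ccontr)
    fix t t' assume t: "t \<in> TB" and t': "t' \<in> TB" and eq: "h t = h t'" and ne: "t \<noteq> t'"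
    have len: "length t = length t'" using eq hlen[of t] hlen[of t'] by simp
    have ex: "\<exists>j. j < length t \<and> t ! j \<noteq> t' ! j"
      using ne len nth_equalityI by blast
    define j where "j = (LEAST j. j < length t \<and> t ! j \<noteq> t' ! j)"
    have j: "j < length t" "t ! j \<noteq> t' ! j" using LeastI_ex[OF ex] unfolding j_def by auto
    have tj: "take j t = take j t'"
    proof (rule nth_equalityI)
      show "length (take j t) = length (take j t')" using len by simp
    next
      fix i assume "i < length (take j t)"
      then have "i < j" by simp
      then have "\<not> (i < length t \<and> t ! i \<noteq> t' ! i)" unfolding j_def using not_less_Least by blast
      then show "take j t ! i = take j t' ! i" using \<open>i < j\<close> j(1) by simp
    qed
    define s where "s = take j t"
    define u where "u = take (Suc j) t"
    define u' where "u' = take (Suc j) t'"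
    have u: "u = s @ [t ! j]" unfolding u_def s_def using j(1) by (simp add: take_Suc_conv_app_nth)
    have u': "u' = s @ [t' ! j]" unfolding u'_def s_def using j(1) len tj by (simp add: take_Suc_conv_app_nth)
    have uT: "u \<in> TB" "u' \<in> TB" unfolding u_def u'_def using tB t t' by auto
    have lens: "length s = j" unfolding s_def using j(1) by simp
    have jN: "j < N"
    proof (rule ccontr)
      assume "\<not> j < N"
      then show False using sib[of s "t ! j" "t' ! j"] uT u u' lens j(2) by simp
    qed
    have vv: "val u j = val u' j" using eq hnth[OF j(1)] hnth[of j t'] j(1) len unfolding u_def u'_def by simp
    have uu: "u \<noteq> u'" using u u' j(2) by simp
    have lowK: "val w j < K" if "w \<in> g ` TA" "length w = Suc j" for w
    proof -
      have "ginv w \<in> TA" using ginv[OF that(1)] by simp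
      moreover have "length (ginv w) = Suc j" using ginv[OF that(1)] glen[of "ginv w"] that(2) by simp
      ultimately
      have "f (ginv w) ! j \<in> S" unfolding S_def using jN by fastforce
      then show ?thesis using K that(1) unfolding val_def by simp
    qed
    have highK: "val w j \<ge> K" if "w \<notin> g ` TA" for w
      using that jN unfolding val_def by simp
    have lu: "length u = Suc j" "length u' = Suc j" using u u' lens by simp_all
    show False
    proof (cases "u \<in> g ` TA"; cases "u' \<in> g ` TA")
      assume iu: "u \<in> g ` TA" and iu': "u' \<in> g ` TA"
      define a where "a = ginv u"
      define a' where "a' = ginv u'"
      have aT: "a \<in> TA" "a' \<in> TA" "g a = u" "g a' = u'" using ginv iu iu' a_def a'_def by auto
      have la: "length a = Suc j" "length a' = Suc j" using glen[OF aT(1)] glen[OF aT(2)] aT(3,4) lu by simp_all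
      have "g (take j a) = g (take j a')" using gtake aT u u' lens by simp
      then have tja: "take j a = take j a'" using injg tA aT by (meson inj_onD)
      have "f a = f a'"
      proof (rule nth_equalityI)
        show "length (f a) = length (f a')" using flen aT la by simp
      next
        fix i assume "i < length (f a)"
        then have i: "i < Suc j" using flen aT la by simp
        show "f a ! i = f a' ! i"
        proof (cases "i = j")
          case True then show ?thesis using vv iu iu' unfolding val_def a_def a'_def by simp
        next
          case False
          then have "i < j" using i by simp
          then have "f a ! i = take j (f a) ! i" "f a' ! i = take j (f a') ! i" by simp_all
          moreover have "take j (f a) = take j (f a')"
            using ftake[OF aT(1), of j] ftake[OF aT(2), of j] tja by simp
          ultimately show ?thesis by simp
        qed
      qed
      then have "a = a'" using injf aT by (meson inj_onD)
      then show False using aT uu by simp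
    next
      assume "u \<in> g ` TA" "u' \<notin> g ` TA"
      then have "val u j < K" "K \<le> val u' j" using lowK lu highK by auto
      then show False using vv by simp
    next
      assume "u \<notin> g ` TA" "u' \<in> g ` TA"
      then have "val u' j < K" "K \<le> val u j" using lowK lu highK by auto
      then show False using vv by simp
    next
      assume iu: "u \<notin> g ` TA" and iu': "u' \<notin> g ` TA"
      then have "idx (pick u) = idx (pick u')" using vv jN unfolding val_def by simp
      then have "pick u = pick u'" using idx pick uT by (meson inj_onD)
      moreover have "map (pick u) [0..<Suc j] = u" "map (pick u') [0..<Suc j] = u'"
        using pick[OF uT(1)] pick[OF uT(2)] lu by simp_all
      ultimately have "u = u'" by simp
      then show False using uu by simp
    qed
  qed
  have rmh: "run_map h R n = val (map R [0..<Suc n]) n" for R n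
    unfolding run_map_def using hnth[of n "map R [0..<Suc n]"] by (simp del: upt_Suc)
  have runsh: "(run_map h R \<in> c00) = (R \<in> SB)" if R: "R \<in> runs TB" for R
  proof (cases "\<forall>n. map R [0..<n] \<in> g ` TA")
    case True
    define a where "a n = ginv (map R [0..<n])" for n
    have aT: "a n \<in> TA" "g (a n) = map R [0..<n]" for n using ginv True a_def by auto
    have la: "length (a n) = n" for n using glen[OF aT(1)[of n]] aT(2)[of n] by simp
    have coh: "take n (a m) = a n" if "n \<le> m" for n m
    proof -
      have "g (take n (a m)) = map R [0..<n]" using gtake aT that by (simp add: take_map_upt min_def)
      then have "g (take n (a m)) = g (a n)" using aT(2)[of n] by simp
      then show ?thesis using inj_onD[OF injg _ tA[OF aT(1)[of m]] aT(1)[of n]] by simp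
    qed
    define RA where "RA i = a (Suc i) ! i" for i
    have mRA: "map RA [0..<n] = a n" for n
    proof (rule nth_equalityI)
      show "length (map RA [0..<n]) = length (a n)" using la by simp
    next
      fix i assume "i < length (map RA [0..<n])"
      then have i: "i < n" by simp
      have "a (Suc i) ! i = take (Suc i) (a n) ! i" using coh[of "Suc i" n] i by simp
      then show "map RA [0..<n] ! i = a n ! i" using i by (simp add: RA_def)
    qed
    have RA: "RA \<in> runs TA" unfolding runs_def using mRA aT by simp
    have gR: "run_map g RA = R"
    proof
      fix n
      have "run_map g RA n = g (a (Suc n)) ! n" unfolding run_map_def using mRA by (simp del: upt_Suc)
      also have "\<dots> = R n" using aT by (simp del: upt_Suc)
      finally show "run_map g RA n = R n" .
    qed
    have hR: "run_map h R = run_map f RA"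
    proof
      fix n
      have "run_map h R n = f (a (Suc n)) ! n" using rmh True unfolding val_def a_def by (simp del: upt_Suc)
      also have "\<dots> = run_map f RA n" unfolding run_map_def using mRA by (simp del: upt_Suc)
      finally show "run_map h R n = run_map f RA n" .
    qed
    have "R \<in> SB \<longleftrightarrow> RA \<in> SA" using gA gB RA gR by blast
    moreover have "run_map f RA \<in> c00 \<longleftrightarrow> RA \<in> SA" using fA fB RA by blast
    ultimately show ?thesis using hR by simp
  next
    case False
    then obtain n0 where n0: "map R [0..<n0] \<notin> g ` TA" by blast
    have ev: "run_map h R n = (if R \<in> SB then 0 else 1)" if n: "n \<ge> max n0 N" for n
    proof -
      let ?u = "map R [0..<Suc n]"
      have "take n0 ?u = map R [0..<n0]" using n by (simp add: take_map_upt min_def del: upt_Suc)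
      then have nu: "?u \<notin> g ` TA" using n0 imgtake[of ?u n0] by auto
      have uT: "?u \<in> TB" using runpre R by blast
      have "pick ?u = R" using pick[OF uT] uniq[OF _ R, of _ "Suc n"] n by simp
      then show ?thesis using rmh nu n unfolding val_def by (simp del: upt_Suc)
    qed
    show ?thesis
    proof
      assume "run_map h R \<in> c00"
      then obtain M where M: "\<forall>n\<ge>M. run_map h R n = 0" unfolding c00_def by blast
      have "run_map h R (max M (max n0 N)) = 0" using M by simp
      then show "R \<in> SB" using ev[of "max M (max n0 N)"] by (auto split: if_splits)
    next
      assume "R \<in> SB"
      then have "\<forall>n\<ge>max n0 N. run_map h R n = 0" using ev by simp
      then show "run_map h R \<in> c00" unfolding c00_def by blast
    qed
  qed
  have chh: "chronological h TB UNIV"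
    unfolding chronological_def using hlen htake by simp
  have "game_embedding h B G_FL"
    unfolding game_embedding_def A_morphism_def B_morphism_def G_FL_def B
    using injh chh runsh SB by (auto simp: runs_def)
  moreover have "\<forall>t\<in>fst A. h (g t) = f t" using agree A by simp
  ultimately show ?thesis by blast
qed

end
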